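(* For every integer $r\ge 0$, $\mathrm{LCD}[6r+6,2] < 4r+4$.
   Context: All codes are binary linear codes, i.e. subspaces of $\mathbb{F}_2^n$; an $[n,k,d]$ code is one of length $n$, dimension $k$ and minimum Hamming distance $d$. A linear code $C$ is an LCD code if $C\cap C^\perp=\{0\}$, where $C^\perp$ is the dual with respect to the standard dot product. For positive integers $n\ge k$, $\mathrm{LCD}[n,k]$ denotes the largest $d$ such that there exists a binary $[n,k,d]$ LCD code. *)

theory Defs
  imports Main
begin

text \<open>Vectors of F_2^n are modelled as functions nat => bool vanishing outside {..<n};
  True stands for 1 in F_2 and addition is exclusive or.\<close>

definition vecs :: "nat \<Rightarrow> (nat \<Rightarrow> bool) set" where
  "vecs n = {x. \<forall>i. n \<le> i \<longrightarrow> \<not> x i}"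

definition vzero :: "nat \<Rightarrow> bool" where
  "vzero = (\<lambda>i. False)"

definition vadd :: "(nat \<Rightarrow> bool) \<Rightarrow> (nat \<Rightarrow> bool) \<Rightarrow> nat \<Rightarrow> bool" where
  "vadd x y = (\<lambda>i. x i \<noteq> y i)"

text \<open>Over F_2 a subspace is exactly a subset containing 0 and closed under addition.\<close>
definition linear_code :: "nat \<Rightarrow> (nat \<Rightarrow> bool) set \<Rightarrow> bool" where
  "linear_code n C \<longleftrightarrow> C \<subseteq> vecs n \<and> vzero \<in> C \<and> (\<forall>x\<in>C. \<forall>y\<in>C. vadd x y \<in> C)"

definition code_dim :: "(nat \<Rightarrow> bool) set \<Rightarrow> nat \<Rightarrow> bool" where
  "code_dim C k \<longleftrightarrow> card C = 2 ^ k"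

definition hweight :: "nat \<Rightarrow> (nat \<Rightarrow> bool) \<Rightarrow> nat" where
  "hweight n x = card {i. i < n \<and> x i}"

definition hdist :: "nat \<Rightarrow> (nat \<Rightarrow> bool) \<Rightarrow> (nat \<Rightarrow> bool) \<Rightarrow> nat" where
  "hdist n x y = card {i. i < n \<and> x i \<noteq> y i}"

definition min_dist :: "nat \<Rightarrow> (nat \<Rightarrow> bool) set \<Rightarrow> nat" where
  "min_dist n C = Min {hdist n x y | x y. x \<in> C \<and> y \<in> C \<and> x \<noteq> y}"

text \<open>Standard dot product over F_2: x.y = 0 iff |supp x \<inter> supp y| is even.\<close>
definition dual_code :: "nat \<Rightarrow> (nat \<Rightarrow> bool) set \<Rightarrow> (nat \<Rightarrow> bool) set" where
  "dual_code n C = {y \<in> vecs n. \<forall>x\<in>C. even (card {i. i < n \<and> x i \<and> y i})}"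

definition is_LCD :: "nat \<Rightarrow> (nat \<Rightarrow> bool) set \<Rightarrow> bool" where
  "is_LCD n C \<longleftrightarrow> C \<inter> dual_code n C = {vzero}"

definition has_LCD :: "nat \<Rightarrow> nat \<Rightarrow> nat \<Rightarrow> bool" where
  "has_LCD n k d \<longleftrightarrow> (\<exists>C. linear_code n C \<and> code_dim C k \<and> is_LCD n C \<and> min_dist n C = d)"

definition LCD_max :: "nat \<Rightarrow> nat \<Rightarrow> nat" where
  "LCD_max n k = (GREATEST d. has_LCD n k d)"

end

theory Submission
  imports Defs
begin

lemma card_sets_bound:
  fixes n :: nat and a b :: "nat \<Rightarrow> bool"
  defines "A \<equiv> {i. i < n \<and> a i}" and "B \<equiv> {i. i < n \<and> b i}"
  shows "card A + card B = card (A \<union> B) + card (A \<inter> B)"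
    and "card {i. i < n \<and> vadd a b i} + card (A \<inter> B) = card (A \<union> B)"
    and "card (A \<union> B) \<le> n"
    and "card (A \<inter> B) \<le> card A"
    and "card {i. i < n \<and> vadd a b i \<and> a i} + card (A \<inter> B) = card A"
proof -
  have fA: "finite A" and fB: "finite B" unfolding A_def B_def by auto
  show "card A + card B = card (A \<union> B) + card (A \<inter> B)"
    using card_Un_Int[OF fA fB] by simp
  have e: "{i. i < n \<and> vadd a b i} = (A \<union> B) - (A \<inter> B)"
    unfolding A_def B_def vadd_def by auto
  show "card {i. i < n \<and> vadd a b i} + card (A \<inter> B) = card (A \<union> B)"
  proof -
    have "A \<inter> B \<subseteq> A \<union> B" by blast
    moreover have "finite (A \<union> B)" using fA fB by simp
    ultimately show ?thesis unfolding e
      using card_Diff_subset[of "A \<inter> B" "A \<union> B"] card_mono[of "A \<union> B" "A \<inter> B"]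
      by (simp add: finite_subset)
  qed
  show "card (A \<union> B) \<le> n"
  proof -
    have "A \<union> B \<subseteq> {..<n}" unfolding A_def B_def by auto
    then have "card (A \<union> B) \<le> card {..<n}" by (intro card_mono) auto
    then show ?thesis by simp
  qed
  show "card (A \<inter> B) \<le> card A" using fA by (simp add: card_mono)
  have e2: "{i. i < n \<and> vadd a b i \<and> a i} = A - (A \<inter> B)"
    unfolding A_def B_def vadd_def by auto
  show "card {i. i < n \<and> vadd a b i \<and> a i} + card (A \<inter> B) = card A"
  proof -
    have "A \<inter> B \<subseteq> A" by blast
    then show ?thesis unfolding e2
      using fA card_Diff_subset[of "A \<inter> B" "A"] card_mono[of "A" "A \<inter> B"]
      by (simp add: finite_subset)
  qed
qed

lemma upper:
  assumes "has_LCD (6 * r + 6) 2 d"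
  shows "d < 4 * r + 4"
proof (rule ccontr)
  assume nd: "\<not> d < 4 * r + 4"
  define n where "n = 6 * r + 6"
  obtain C where lc: "linear_code n C" and cd: "code_dim C 2" and lcd: "is_LCD n C"
    and md: "min_dist n C = d"
    using assms unfolding has_LCD_def n_def by blast
  have cC: "card C = 4" using cd unfolding code_dim_def by simp
  have fC: "finite C" using cC by (metis card.infinite zero_neq_numeral)
  have z: "vzero \<in> C" and cl: "\<And>x y. x \<in> C \<Longrightarrow> y \<in> C \<Longrightarrow> vadd x y \<in> C"
    and sub: "C \<subseteq> vecs n" using lc unfolding linear_code_def by auto
  have "C - {vzero} \<noteq> {}"
  proof
    assume "C - {vzero} = {}"
    then have "C \<subseteq> {vzero}" by blast
    then have "card C \<le> card {vzero}" by (intro card_mono) auto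
    then show False using cC by simp
  qed
  then obtain a where a: "a \<in> C" "a \<noteq> vzero" by blast
  have "C - {vzero, a} \<noteq> {}"
  proof
    assume "C - {vzero, a} = {}"
    then have "C \<subseteq> {vzero, a}" by blast
    then have "card C \<le> card {vzero, a}" by (intro card_mono) auto
    also have "\<dots> \<le> 2" by (simp add: card_insert_if)
    finally have "card C \<le> 2" .
    then show False using cC by simp
  qed
  then obtain b where b: "b \<in> C" "b \<noteq> vzero" "b \<noteq> a" by blast
  have vab: "vadd a b \<noteq> vzero" "vadd a b \<noteq> a" "vadd a b \<noteq> b"
    using a b unfolding vadd_def vzero_def fun_eq_iff by auto
  have abC: "vadd a b \<in> C" using cl a b by blast
  have Ceq: "C = {vzero, a, b, vadd a b}"
  proof -
    have s: "{vzero, a, b, vadd a b} \<subseteq> C" using z a b abC by blast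
    have "card {vzero, a, b, vadd a b} = 4" using a b vab by auto
    then show ?thesis using card_subset_eq[OF fC s] cC by simp
  qed
  have hw: "\<And>x. hdist n x vzero = card {i. i < n \<and> x i}"
    unfolding hdist_def vzero_def by simp
  have fin: "finite {hdist n x y | x y. x \<in> C \<and> y \<in> C \<and> x \<noteq> y}"
  proof -
    have "{hdist n x y | x y. x \<in> C \<and> y \<in> C \<and> x \<noteq> y} \<subseteq> (\<lambda>(x,y). hdist n x y) ` (C \<times> C)"
      by auto
    then show ?thesis using fC finite_subset by blast
  qed
  have le: "\<And>x. x \<in> C \<Longrightarrow> x \<noteq> vzero \<Longrightarrow> d \<le> card {i. i < n \<and> x i}"
  proof -
    fix x assume "x \<in> C" "x \<noteq> vzero"
    then have "\<exists>x' y'. hdist n x vzero = hdist n x' y' \<and> x' \<in> C \<and> y' \<in> C \<and> x' \<noteq> y'"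
      using z by blast
    then have "hdist n x vzero \<in> {hdist n x y | x y. x \<in> C \<and> y \<in> C \<and> x \<noteq> y}"
      by (simp only: mem_Collect_eq)
    then have "Min {hdist n x y | x y. x \<in> C \<and> y \<in> C \<and> x \<noteq> y} \<le> hdist n x vzero"
      by (rule Min_le[OF fin])
    then show "d \<le> card {i. i < n \<and> x i}" using md hw[of x]
      unfolding min_dist_def by simp
  qed
  define A where "A = {i. i < n \<and> a i}"
  define B where "B = {i. i < n \<and> b i}"
  have wa: "d \<le> card A" using le a unfolding A_def by blast
  have wb: "d \<le> card B" using le b unfolding B_def by blast
  have wab: "d \<le> card {i. i < n \<and> vadd a b i}" using le abC vab by blast
  note cs = card_sets_bound[of n a b, folded A_def B_def]
  have eA: "card A = 4 * r + 4" and eI: "card (A \<inter> B) = 2 * r + 2"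
    and eD: "card {i. i < n \<and> vadd a b i \<and> a i} = 2 * r + 2"
    using cs wa wb wab nd unfolding n_def by linarith+
  have "a \<in> dual_code n C"
    unfolding dual_code_def
  proof (intro CollectI conjI ballI)
    show "a \<in> vecs n" using a sub by blast
    fix x assume "x \<in> C"
    then consider "x = vzero" | "x = a" | "x = b" | "x = vadd a b" using Ceq by blast
    then show "even (card {i. i < n \<and> x i \<and> a i})"
    proof cases
      case 1 then show ?thesis by (simp add: vzero_def)
    next
      case 2 then show ?thesis using eA unfolding A_def by simp
    next
      case 3
      have "{i. i < n \<and> x i \<and> a i} = A \<inter> B" using 3 unfolding A_def B_def by auto
      then show ?thesis using eI by simp
    next
      case 4 then show ?thesis using eD by simp
    qed
  qed
  then have "a \<in> C \<inter> dual_code n C" using a by blast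
  then show False using lcd a unfolding is_LCD_def by blast
qed

lemma exists_code: "has_LCD (6 * r + 6) 2 1"
proof -
  define n where "n = 6 * r + 6"
  define e1 :: "nat \<Rightarrow> bool" where "e1 = (\<lambda>i. i = 0)"
  define e2 :: "nat \<Rightarrow> bool" where "e2 = (\<lambda>i. i = 1)"
  define C where "C = {vzero, e1, e2, vadd e1 e2}"
  have d: "vzero \<noteq> e1" "vzero \<noteq> e2" "vzero \<noteq> vadd e1 e2" "e1 \<noteq> e2" "e1 \<noteq> vadd e1 e2"
     "e2 \<noteq> vadd e1 e2"
    unfolding vzero_def e1_def e2_def vadd_def fun_eq_iff by auto
  have lc: "linear_code n C"
    unfolding linear_code_def C_def
    by (auto simp: vecs_def vzero_def e1_def e2_def vadd_def n_def fun_eq_iff)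
  have cd: "code_dim C 2" unfolding code_dim_def C_def using d by simp
  have lcd: "is_LCD n C"
    unfolding is_LCD_def
  proof
    show "{vzero} \<subseteq> C \<inter> dual_code n C"
      using lc unfolding C_def dual_code_def linear_code_def
      by (auto simp: vzero_def)
    show "C \<inter> dual_code n C \<subseteq> {vzero}"
    proof
      fix y assume y: "y \<in> C \<inter> dual_code n C"
      have h1: "even (card {i. i < n \<and> e1 i \<and> y i})" using y unfolding dual_code_def C_def by blast
      have h2: "even (card {i. i < n \<and> e2 i \<and> y i})" using y unfolding dual_code_def C_def by blast
      have s1: "{i. i < n \<and> e1 i \<and> e1 i} = {0}" unfolding e1_def n_def by auto
      have s2: "{i. i < n \<and> e2 i \<and> e2 i} = {1}" unfolding e2_def n_def by auto
      have s3: "{i. i < n \<and> e1 i \<and> vadd e1 e2 i} = {0}" unfolding e1_def e2_def vadd_def n_def by auto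
      have "y \<in> C" using y by blast
      then consider "y = vzero" | "y = e1" | "y = e2" | "y = vadd e1 e2" unfolding C_def by blast
      then show "y \<in> {vzero}"
      proof cases
        case 1 then show ?thesis by simp
      next
        case 2 then show ?thesis using h1 s1 by simp
      next
        case 3 then show ?thesis using h2 s2 by simp
      next
        case 4 then show ?thesis using h1 s3 by simp
      qed
    qed
  qed
  have md: "min_dist n C = 1"
  proof -
    have fC: "finite C" unfolding C_def by simp
    let ?S = "{hdist n x y | x y. x \<in> C \<and> y \<in> C \<and> x \<noteq> y}"
    have fin: "finite ?S"
    proof -
      have "?S \<subseteq> (\<lambda>(x,y). hdist n x y) ` (C \<times> C)" by auto
      then show ?thesis using fC finite_subset by blast
    qed
    have one: "1 \<in> ?S"
    proof -
      have "{i. i < n \<and> e1 i \<noteq> vzero i} = {0}" unfolding e1_def vzero_def n_def by auto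
      then have "hdist n e1 vzero = 1" unfolding hdist_def by simp
      moreover have "hdist n e1 vzero \<in> ?S"
      proof -
        have "e1 \<in> C" "vzero \<in> C" "e1 \<noteq> vzero" using d unfolding C_def by auto
        then show ?thesis by blast
      qed
      ultimately show ?thesis by simp
    qed
    have pos: "\<forall>s\<in>?S. 1 \<le> s"
    proof
      fix s assume "s \<in> ?S"
      then obtain x y where xy: "x \<in> C" "y \<in> C" "x \<noteq> y" "s = hdist n x y" by blast
      have "x \<in> vecs n" "y \<in> vecs n" using lc xy unfolding linear_code_def by auto
      have "\<exists>i. x i \<noteq> y i" using xy(3) by (simp add: fun_eq_iff)
      then obtain i where i1: "x i \<noteq> y i" by blast
      have "i < n"
      proof (rule ccontr)
        assume "\<not> i < n"
        then show False using \<open>x \<in> vecs n\<close> \<open>y \<in> vecs n\<close> i1 unfolding vecs_def by auto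
      qed
      note i = i1 this
      then have "{i. i < n \<and> x i \<noteq> y i} \<noteq> {}" using i by blast
      then show "1 \<le> s" using xy(4) unfolding hdist_def
        by (simp add: Suc_le_eq card_gt_0_iff)
    qed
    show ?thesis unfolding min_dist_def
    proof -
      have "Min ?S \<le> 1" using Min_le[OF fin one] .
      moreover have "Min ?S \<in> ?S" using Min_in[OF fin] one by blast
      ultimately show "Min ?S = 1" using pos by (meson le_antisym)
    qed
  qed
  have "has_LCD n 2 1" unfolding has_LCD_def using lc cd lcd md by blast
  then show ?thesis by (simp add: n_def)
qed

theorem proposition2p4:
  fixes r :: nat
  shows "LCD_max (6 * r + 6) 2 < 4 * r + 4"
proof -
  have "has_LCD (6 * r + 6) 2 (GREATEST d. has_LCD (6 * r + 6) 2 d)"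
  proof (rule GreatestI_ex_nat[where b = "4 * r + 4"])
    show "\<exists>k. has_LCD (6 * r + 6) 2 k" using exists_code by blast
    show "\<And>y. has_LCD (6 * r + 6) 2 y \<Longrightarrow> y \<le> 4 * r + 4" using upper less_imp_le by blast
  qed
  then show ?thesis unfolding LCD_max_def by (rule upper)
qed

end
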